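(* Let $(V,e)$ be a unital $\ast$-normed space which is a function system, i.e. $\operatorname{ball}V=S^\circ$ where $S=V_{he}^\ast\cap\operatorname{ball}V^\ast$. Let $\mathfrak{c}=\{v\in V_h:\langle v,\varphi\rangle\ge0\ \forall\varphi\in S\}$ and $\|v\|_e=\sup\{|\langle v,\varphi\rangle|:\varphi\in S\}$. Then $\mathfrak{c}$ is a separated, closed, unital cone in $V$ with $S(\mathfrak{c})=S$, and $\|\cdot\|=\|\cdot\|_e$. In particular $\|e\|=1$.
   Context: A $\ast$-normed space is a complex vector space with involution and norm satisfying $\|v^\ast\|=\|v\|$; $V_h$ are the hermitian elements; $V^\ast$ has involution $\langle v,\varphi^\ast\rangle=\overline{\langle v^\ast,\varphi\rangle}$, $V_h^\ast$ its hermitian bounded functionals, and for nonzero $e\in V_h$, $V_{he}^\ast=\{y\in V_h^\ast:\langle e,y\rangle=1\}$. $(V,e)$ is unital if $V_{he}^\ast\cap\operatorname{ball}V^\ast\neq\varnothing$. $S^\circ=\{v\in V:|\langle v,\varphi\rangle|\le1\ \forall\varphi\in S\}$. A cone $\mathfrak{c}\subseteq V_h$ is separated if $\mathfrak{c}\cap-\mathfrak{c}=\{0\}$, unital if for every $v\in V_h$ some $v+re$ ($r\ge0$) lies in $\mathfrak{c}$; $S(\mathfrak{c})$ is the set of linear functionals $\varphi$ on $V$ with $\varphi(\mathfrak{c})\ge0$, $\varphi(e)=1$. *)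

theory Defs
  imports "HOL-Analysis.Analysis"
begin

text \<open>Isabelle's library has no complex normed vector spaces, so a complex normed space is
  represented as a real normed vector space together with J (multiplication by i).\<close>
definition cscale :: "('a::real_vector \<Rightarrow> 'a) \<Rightarrow> complex \<Rightarrow> 'a \<Rightarrow> 'a" where
  "cscale J c v = Re c *\<^sub>R v + Im c *\<^sub>R J v"

definition complex_structure :: "('a::real_normed_vector \<Rightarrow> 'a) \<Rightarrow> bool" where
  "complex_structure J \<longleftrightarrow> linear J \<and> (\<forall>v. J (J v) = - v) \<and>
     (\<forall>c v. norm (cscale J c v) = cmod c * norm v)"

definition star_normed :: "('a::real_normed_vector \<Rightarrow> 'a) \<Rightarrow> ('a \<Rightarrow> 'a) \<Rightarrow> bool" where
  "star_normed J st \<longleftrightarrow> complex_structure J \<and>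
     (\<forall>v. st (st v) = v) \<and>
     (\<forall>c v. st (cscale J c v) = cscale J (cnj c) (st v)) \<and>
     (\<forall>u v. st (u + v) = st u + st v) \<and>
     (\<forall>v. norm (st v) = norm v)"

definition herm :: "('a \<Rightarrow> 'a) \<Rightarrow> 'a set" where
  "herm st = {v. st v = v}"

definition clin_fun :: "('a::real_vector \<Rightarrow> 'a) \<Rightarrow> ('a \<Rightarrow> complex) \<Rightarrow> bool" where
  "clin_fun J \<phi> \<longleftrightarrow> (\<forall>c v. \<phi> (cscale J c v) = c * \<phi> v) \<and> (\<forall>u v. \<phi> (u + v) = \<phi> u + \<phi> v)"

definition dual_ball :: "('a::real_normed_vector \<Rightarrow> 'a) \<Rightarrow> ('a \<Rightarrow> complex) set" where
  "dual_ball J = {\<phi>. clin_fun J \<phi> \<and> bounded_linear \<phi> \<and> onorm \<phi> \<le> 1}"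

text \<open>Hermitian bounded functionals: phi^* = phi, where <v, phi^*> = conj <v^*, phi>.\<close>
definition herm_dual :: "('a::real_normed_vector \<Rightarrow> 'a) \<Rightarrow> ('a \<Rightarrow> 'a) \<Rightarrow> ('a \<Rightarrow> complex) set" where
  "herm_dual J st = {\<phi>. clin_fun J \<phi> \<and> bounded_linear \<phi> \<and> (\<forall>v. cnj (\<phi> (st v)) = \<phi> v)}"

definition herm_dual_e :: "('a::real_normed_vector \<Rightarrow> 'a) \<Rightarrow> ('a \<Rightarrow> 'a) \<Rightarrow> 'a \<Rightarrow> ('a \<Rightarrow> complex) set" where
  "herm_dual_e J st e = {\<phi>\<in>herm_dual J st. \<phi> e = 1}"

definition polar :: "('a \<Rightarrow> complex) set \<Rightarrow> 'a set" where
  "polar S = {v. \<forall>\<phi>\<in>S. cmod (\<phi> v) \<le> 1}"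

definition separated_cone :: "'a::real_vector set \<Rightarrow> bool" where
  "separated_cone c \<longleftrightarrow> c \<inter> uminus ` c = {0}"

definition unital_cone :: "('a::real_vector \<Rightarrow> 'a) \<Rightarrow> 'a \<Rightarrow> 'a set \<Rightarrow> bool" where
  "unital_cone st e c \<longleftrightarrow> (\<forall>v\<in>herm st. \<exists>r::real. r \<ge> 0 \<and> v + r *\<^sub>R e \<in> c)"

definition states :: "('a::real_vector \<Rightarrow> 'a) \<Rightarrow> 'a \<Rightarrow> 'a set \<Rightarrow> ('a \<Rightarrow> complex) set" where
  "states J e c = {\<phi>. clin_fun J \<phi> \<and> (\<forall>v\<in>c. Im (\<phi> v) = 0 \<and> Re (\<phi> v) \<ge> 0) \<and> \<phi> e = 1}"

end

theory Submission
  imports Defs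
begin

lemma cscale_real: "cscale J (of_real r) v = r *\<^sub>R v"
  by (simp add: cscale_def)

lemma cscale_ii: "cscale J \<i> v = J v"
  by (simp add: cscale_def)

lemma clin_add: "clin_fun J \<phi> \<Longrightarrow> \<phi> (u + v) = \<phi> u + \<phi> v"
  by (simp add: clin_fun_def)

lemma clin_scaleR: "clin_fun J \<phi> \<Longrightarrow> \<phi> (r *\<^sub>R v) = of_real r * \<phi> v"
  unfolding clin_fun_def by (metis cscale_real)

lemma clin_J: "clin_fun J \<phi> \<Longrightarrow> \<phi> (J v) = \<i> * \<phi> v"
  unfolding clin_fun_def by (metis cscale_ii)

lemma clin_linear: "clin_fun J \<phi> \<Longrightarrow> linear \<phi>"
  by (rule linearI) (simp_all add: clin_add clin_scaleR scaleR_conv_of_real)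

lemma st_add: "star_normed J st \<Longrightarrow> st (u + v) = st u + st v"
  by (simp add: star_normed_def)

lemma st_scaleR: "star_normed J st \<Longrightarrow> st (r *\<^sub>R v) = r *\<^sub>R st v"
  unfolding star_normed_def by (metis cscale_real complex_cnj_complex_of_real)

lemma st_linear: "star_normed J st \<Longrightarrow> linear st"
  by (rule linearI) (simp_all add: st_add st_scaleR)

lemma st_J: "star_normed J st \<Longrightarrow> st (J v) = - J (st v)"
proof -
  assume a: "star_normed J st"
  have "st (cscale J \<i> v) = cscale J (cnj \<i>) (st v)" using a by (simp add: star_normed_def)
  thus ?thesis by (simp add: cscale_def)
qed

lemma J_linear: "star_normed J st \<Longrightarrow> linear J"
  by (simp add: star_normed_def complex_structure_def)

lemma JJ: "star_normed J st \<Longrightarrow> J (J v) = - v"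
  by (simp add: star_normed_def complex_structure_def)

lemma norm_st: "star_normed J st \<Longrightarrow> norm (st v) = norm v"
  by (simp add: star_normed_def)

lemma st_st: "star_normed J st \<Longrightarrow> st (st v) = v"
  by (simp add: star_normed_def)

lemma norm_cscale: "star_normed J st \<Longrightarrow> norm (cscale J c v) = cmod c * norm v"
  by (simp add: star_normed_def complex_structure_def)

lemma st_cscale: "star_normed J st \<Longrightarrow> st (cscale J c v) = cscale J (cnj c) (st v)"
  by (simp add: star_normed_def)

lemma clin_cscale: "clin_fun J \<phi> \<Longrightarrow> \<phi> (cscale J c v) = c * \<phi> v"
  by (simp add: clin_fun_def)

theorem lemma4p1:
  fixes J st :: "'a::real_normed_vector \<Rightarrow> 'a" and e :: 'a
  assumes "star_normed J st"
    and "e \<in> herm st" and "e \<noteq> 0"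
    and "herm_dual_e J st e \<inter> dual_ball J \<noteq> {}"
    and "{v. norm v \<le> 1} = polar (herm_dual_e J st e \<inter> dual_ball J)"
  shows "let S = herm_dual_e J st e \<inter> dual_ball J;
             c = {v\<in>herm st. \<forall>\<phi>\<in>S. Im (\<phi> v) = 0 \<and> Re (\<phi> v) \<ge> 0}
         in convex_cone c \<and> separated_cone c \<and> closed c \<and> unital_cone st e c
            \<and> states J e c = S
            \<and> (\<forall>v. norm v = (SUP \<phi>\<in>S. cmod (\<phi> v)))
            \<and> norm e = 1"
proof -
  note sn = assms(1)
  define S where "S = herm_dual_e J st e \<inter> dual_ball J"
  define c where "c = {v\<in>herm st. \<forall>\<phi>\<in>S. Im (\<phi> v) = 0 \<and> Re (\<phi> v) \<ge> 0}"
  have Sne: "S \<noteq> {}" using assms(4) S_def by simp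
  have pol: "\<And>v. (\<forall>\<phi>\<in>S. cmod (\<phi> v) \<le> 1) \<Longrightarrow> norm v \<le> 1"
    using assms(5) unfolding S_def polar_def by blast
  have Sclin: "\<And>\<phi>. \<phi> \<in> S \<Longrightarrow> clin_fun J \<phi>"
    and Sbl: "\<And>\<phi>. \<phi> \<in> S \<Longrightarrow> bounded_linear \<phi>"
    and Sherm: "\<And>\<phi> v. \<phi> \<in> S \<Longrightarrow> cnj (\<phi> (st v)) = \<phi> v"
    and Se: "\<And>\<phi>. \<phi> \<in> S \<Longrightarrow> \<phi> e = 1"
    and Son: "\<And>\<phi>. \<phi> \<in> S \<Longrightarrow> onorm \<phi> \<le> 1"
    unfolding S_def herm_dual_e_def herm_dual_def dual_ball_def by auto
  have Sbound: "\<And>\<phi> v. \<phi> \<in> S \<Longrightarrow> cmod (\<phi> v) \<le> norm v"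
  proof -
    fix \<phi> v assume "\<phi> \<in> S"
    hence "cmod (\<phi> v) \<le> onorm \<phi> * norm v" using Sbl onorm by blast
    also have "\<dots> \<le> 1 * norm v" using Son[OF \<open>\<phi> \<in> S\<close>] by (intro mult_right_mono) auto
    finally show "cmod (\<phi> v) \<le> norm v" by simp
  qed
  have Sreal: "\<And>\<phi> v. \<phi> \<in> S \<Longrightarrow> v \<in> herm st \<Longrightarrow> Im (\<phi> v) = 0"
  proof -
    fix \<phi> v assume "\<phi> \<in> S" "v \<in> herm st"
    hence "cnj (\<phi> v) = \<phi> v" using Sherm[of \<phi> v] by (simp add: herm_def)
    thus "Im (\<phi> v) = 0" by (metis Reals_cnj_iff complex_is_Real_iff)
  qed
  have hadd: "\<And>u v. u \<in> herm st \<Longrightarrow> v \<in> herm st \<Longrightarrow> u + v \<in> herm st"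
    using st_add[OF sn] by (simp add: herm_def)
  have hscale: "\<And>r v. v \<in> herm st \<Longrightarrow> r *\<^sub>R v \<in> herm st"
    using st_scaleR[OF sn] by (simp add: herm_def)
  have h0: "0 \<in> herm st" using hscale[of e 0] assms(2) by simp
  have eherm: "e \<in> herm st" by fact
  have cc: "convex_cone c"
    unfolding convex_cone_iff
  proof (intro conjI ballI allI impI)
    have "Im (\<phi> 0) = 0 \<and> Re (\<phi> 0) \<ge> 0" if "\<phi> \<in> S" for \<phi>
    proof -
      have "\<phi> 0 = 0" using that Sclin clin_linear linear_0 by blast
      thus ?thesis by simp
    qed
    thus "0 \<in> c" unfolding c_def using h0 by blast
  next
    fix x y assume xy: "x \<in> c" "y \<in> c"
    have "Im (\<phi> (x + y)) = 0 \<and> Re (\<phi> (x + y)) \<ge> 0" if "\<phi> \<in> S" for \<phi>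
    proof -
      have "\<phi> (x + y) = \<phi> x + \<phi> y" using that Sclin clin_add by blast
      thus ?thesis using xy that unfolding c_def by auto
    qed
    thus "x + y \<in> c" using xy hadd unfolding c_def by blast
  next
    fix x and r :: real assume x: "x \<in> c" "0 \<le> r"
    have "Im (\<phi> (r *\<^sub>R x)) = 0 \<and> Re (\<phi> (r *\<^sub>R x)) \<ge> 0" if "\<phi> \<in> S" for \<phi>
    proof -
      have "\<phi> (r *\<^sub>R x) = of_real r * \<phi> x" using that Sclin clin_scaleR by blast
      thus ?thesis using x that unfolding c_def by auto
    qed
    thus "r *\<^sub>R x \<in> c" using x hscale unfolding c_def by blast
  qed
  have sep: "separated_cone c"
    unfolding separated_cone_def
  proof
    show "{0} \<subseteq> c \<inter> uminus ` c" using cc by (auto simp: convex_cone_iff image_iff intro!: bexI[of _ 0])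
  next
    show "c \<inter> uminus ` c \<subseteq> {0}"
    proof
      fix v assume "v \<in> c \<inter> uminus ` c"
      then obtain w where v: "v \<in> c" "w \<in> c" "v = - w" by auto
      have z: "\<And>\<phi>. \<phi> \<in> S \<Longrightarrow> \<phi> v = 0"
      proof -
        fix \<phi> assume p: "\<phi> \<in> S"
        have "\<phi> v = - \<phi> w" using v(3) clin_linear[OF Sclin[OF p]] linear_neg by blast
        moreover have "Im (\<phi> v) = 0" "Re (\<phi> v) \<ge> 0" "Im (\<phi> w) = 0" "Re (\<phi> w) \<ge> 0"
          using v p unfolding c_def by auto
        ultimately show "\<phi> v = 0" by (simp add: complex_eq_iff)
      qed
      have nt: "norm (t *\<^sub>R v) \<le> 1" for t :: real
      proof (rule pol, intro ballI)
        fix \<phi> assume p: "\<phi> \<in> S"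
        have "\<phi> (t *\<^sub>R v) = of_real t * \<phi> v" using p Sclin clin_scaleR by blast
        thus "cmod (\<phi> (t *\<^sub>R v)) \<le> 1" using z[OF p] by simp
      qed
      have "v = 0"
      proof (rule ccontr)
        assume "v \<noteq> 0"
        hence "norm ((2 / norm v) *\<^sub>R v) = 2" by simp
        thus False using nt[of "2 / norm v"] by simp
      qed
      thus "v \<in> {0}" by simp
    qed
  qed
  have blst: "bounded_linear st"
    by (rule bounded_linear_intro[where K=1]) (simp_all add: st_add[OF sn] st_scaleR[OF sn] norm_st[OF sn])
  have clherm: "closed (herm st)"
  proof -
    have "continuous_on UNIV st" using blst linear_continuous_on by blast
    hence "closed {v. st v = id v}" by (intro closed_Collect_eq continuous_on_id) auto
    thus ?thesis by (simp add: herm_def)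
  qed
  have cleq: "c = herm st \<inter> (\<Inter>\<phi>\<in>S. {v. Im (\<phi> v) = 0} \<inter> {v. 0 \<le> Re (\<phi> v)})"
    unfolding c_def by auto
  have clA: "closed ({v. Im (\<phi> v) = 0} \<inter> {v. 0 \<le> Re (\<phi> v)})" if p: "\<phi> \<in> S" for \<phi>
  proof -
    have cp: "continuous_on UNIV \<phi>" using Sbl[OF p] linear_continuous_on by blast
    have "closed {v. Im (\<phi> v) = 0}"
      by (rule closed_Collect_eq) (auto intro!: continuous_intros cp)
    moreover have "closed {v. 0 \<le> Re (\<phi> v)}"
      by (rule closed_Collect_le) (auto intro!: continuous_intros cp)
    ultimately show ?thesis by blast
  qed
  have clos: "closed c"
    unfolding cleq using clA clherm by blast
  have pos: "norm h *\<^sub>R e + s *\<^sub>R h \<in> c" if h: "h \<in> herm st" and s: "\<bar>s\<bar> \<le> 1" for h s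
  proof -
    have "Im (\<psi> (norm h *\<^sub>R e + s *\<^sub>R h)) = 0 \<and> Re (\<psi> (norm h *\<^sub>R e + s *\<^sub>R h)) \<ge> 0"
      if p: "\<psi> \<in> S" for \<psi>
    proof -
      have eq: "\<psi> (norm h *\<^sub>R e + s *\<^sub>R h) = of_real (norm h) + of_real s * \<psi> h"
        using Sclin[OF p] Se[OF p] by (simp add: clin_add clin_scaleR)
      have im: "Im (\<psi> h) = 0" using Sreal[OF p h] .
      have "\<bar>Re (\<psi> h)\<bar> \<le> norm h" using abs_Re_le_cmod[of "\<psi> h"] Sbound[OF p, of h] by linarith
      moreover have "\<bar>s * Re (\<psi> h)\<bar> \<le> \<bar>Re (\<psi> h)\<bar>"
        using s by (simp add: abs_mult mult_left_le_one_le)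
      ultimately show ?thesis unfolding eq using im by auto
    qed
    moreover have "norm h *\<^sub>R e + s *\<^sub>R h \<in> herm st" using hadd hscale h eherm by blast
    ultimately show ?thesis unfolding c_def by blast
  qed
  have un: "unital_cone st e c"
    unfolding unital_cone_def
  proof
    fix v assume v: "v \<in> herm st"
    have "norm v *\<^sub>R e + 1 *\<^sub>R v \<in> c" by (rule pos[OF v]) simp
    thus "\<exists>r::real. r \<ge> 0 \<and> v + r *\<^sub>R e \<in> c"
      by (intro exI[of _ "norm v"]) (simp add: add.commute)
  qed
  have st_eq: "states J e c = S"
  proof
    show "S \<subseteq> states J e c"
      unfolding states_def c_def using Sclin Se by blast
  next
    show "states J e c \<subseteq> S"
    proof
      fix \<phi> assume "\<phi> \<in> states J e c"
      hence cl: "clin_fun J \<phi>" and pc: "\<And>v. v \<in> c \<Longrightarrow> Im (\<phi> v) = 0 \<and> Re (\<phi> v) \<ge> 0"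
        and pe: "\<phi> e = 1" unfolding states_def by auto
      have lin: "linear \<phi>" using clin_linear[OF cl] .
      have hb: "Im (\<phi> h) = 0 \<and> \<bar>Re (\<phi> h)\<bar> \<le> norm h" if h: "h \<in> herm st" for h
      proof -
        have e1: "\<phi> (norm h *\<^sub>R e + s *\<^sub>R h) = of_real (norm h) + of_real s * \<phi> h" for s
          using cl pe by (simp add: clin_add clin_scaleR)
        have a: "Im (\<phi> h) = 0 \<and> Re (\<phi> h) + norm h \<ge> 0"
          using pc[OF pos[OF h, of 1]] e1[of 1] by simp
        have b: "norm h - Re (\<phi> h) \<ge> 0"
          using pc[OF pos[OF h, of "-1"]] e1[of "-1"] by simp
        show ?thesis using a b by linarith
      qed
      have hcm: "cmod (\<phi> h) \<le> norm h" if h: "h \<in> herm st" for h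
        using hb[OF h] by (simp add: cmod_eq_Re)
      have hermf: "cnj (\<phi> (st v)) = \<phi> v" for v
      proof -
        define h where "h = (1/2) *\<^sub>R (v + st v)"
        define k where "k = (1/2) *\<^sub>R (J (st v) - J v)"
        have lJ: "linear J" using J_linear[OF sn] .
        have lst: "linear st" using st_linear[OF sn] .
        have hh: "h \<in> herm st" unfolding herm_def h_def
          using st_st[OF sn] by (simp add: linear_add[OF lst] linear_scale[OF lst] add.commute)
        have kh: "k \<in> herm st" unfolding herm_def k_def
          using st_st[OF sn] st_J[OF sn]
          by (simp add: linear_diff[OF lst] linear_scale[OF lst] linear_neg[OF lJ])
        have Jk: "J k = (1/2) *\<^sub>R (v - st v)" unfolding k_def
          using JJ[OF sn] by (simp add: linear_diff[OF lJ] linear_scale[OF lJ])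
        have half: "(1/2) *\<^sub>R x + (1/2) *\<^sub>R x = x" for x :: 'a
          by (metis scaleR_add_left field_sum_of_halves scaleR_one)
        have v1: "v = h + J k" unfolding Jk h_def by (simp add: algebra_simps half)
        have v2: "st v = h - J k" unfolding Jk h_def by (simp add: algebra_simps half)
        have p1: "\<phi> v = \<phi> h + \<i> * \<phi> k" using v1 cl by (metis clin_add clin_J)
        have p2: "\<phi> (st v) = \<phi> h - \<i> * \<phi> k" using v2 cl lin by (metis clin_J linear_diff)
        show ?thesis using p1 p2 hb[OF hh] hb[OF kh] by (simp add: complex_eq_iff)
      qed
      have bnd: "cmod (\<phi> v) \<le> norm v" for v
      proof (cases "\<phi> v = 0")
        case True thus ?thesis by simp
      next
        case False
        define z where "z = \<phi> v"
        define u where "u = cnj z / of_real (cmod z)"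
        define w where "w = cscale J u v"
        define h where "h = (1/2) *\<^sub>R (w + st w)"
        have zn: "z \<noteq> 0" using False z_def by simp
        have cu: "cmod u = 1" unfolding u_def using zn by (simp add: norm_divide)
        have c1: "cnj z * z = of_real ((cmod z)^2)" by (subst mult.commute) (rule complex_norm_square[symmetric])
        have "u * z = (cnj z * z) / of_real (cmod z)" unfolding u_def by simp
        also have "\<dots> = of_real ((cmod z)^2 / cmod z)" unfolding c1 by simp
        also have "\<dots> = of_real (cmod z)" using zn by (simp add: power2_eq_square)
        finally have uz: "u * z = of_real (cmod z)" .
        have pw: "\<phi> w = of_real (cmod z)" unfolding w_def
          using clin_cscale[OF cl] uz z_def by simp
        have pstw: "\<phi> (st w) = cnj (\<phi> w)" using hermf[of w] by (metis complex_cnj_cnj)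
        have ph: "\<phi> h = of_real (cmod z)" unfolding h_def
          using cl pw pstw by (simp add: clin_add clin_scaleR)
        have hh: "h \<in> herm st" unfolding herm_def h_def
          using st_st[OF sn] by (simp add: st_add[OF sn] st_scaleR[OF sn] add.commute)
        have "norm h \<le> (1/2) * (norm w + norm (st w))" unfolding h_def
          by (simp add: norm_triangle_ineq)
        also have "\<dots> = norm v" using norm_st[OF sn] norm_cscale[OF sn] cu w_def by simp
        finally have "norm h \<le> norm v" .
        moreover have "cmod (\<phi> h) \<le> norm h" using hcm[OF hh] .
        ultimately show ?thesis using ph z_def by simp
      qed
      have bl: "bounded_linear \<phi>"
        by (rule bounded_linear_intro[where K=1])
           (simp_all add: clin_add[OF cl] clin_scaleR[OF cl] scaleR_conv_of_real bnd)
      have "onorm \<phi> \<le> 1" by (rule onorm_bound) (simp_all add: bnd)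
      thus "\<phi> \<in> S" unfolding S_def herm_dual_e_def herm_dual_def dual_ball_def
        using cl bl hermf pe by blast
    qed
  qed
  have bdd: "bdd_above ((\<lambda>\<phi>. cmod (\<phi> v)) ` S)" for v
    using Sbound by (intro bdd_aboveI[of _ "norm v"]) auto
  have nrm: "norm v = (SUP \<phi>\<in>S. cmod (\<phi> v))" for v
  proof (rule antisym)
    show "(SUP \<phi>\<in>S. cmod (\<phi> v)) \<le> norm v"
      using Sne Sbound by (intro cSUP_least) auto
  next
    define s where "s = (SUP \<phi>\<in>S. cmod (\<phi> v))"
    obtain \<phi>0 where "\<phi>0 \<in> S" using Sne by blast
    hence s0: "0 \<le> s" unfolding s_def
      using cSUP_upper[OF _ bdd[of v]] norm_ge_zero order_trans by blast
    show "norm v \<le> s"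
    proof (rule dense_ge)
      fix t assume ts: "s < t"
      hence t0: "0 < t" using s0 by simp
      have "norm ((1/t) *\<^sub>R v) \<le> 1"
      proof (rule pol, intro ballI)
        fix \<phi> assume p: "\<phi> \<in> S"
        have "\<phi> ((1/t) *\<^sub>R v) = of_real (1/t) * \<phi> v" using p Sclin clin_scaleR by blast
        hence "cmod (\<phi> ((1/t) *\<^sub>R v)) = cmod (\<phi> v) / t" using t0 by (simp add: norm_divide)
        moreover have "cmod (\<phi> v) \<le> s" unfolding s_def using cSUP_upper[OF p bdd[of v]] .
        ultimately show "cmod (\<phi> ((1/t) *\<^sub>R v)) \<le> 1" using ts t0 by simp
      qed
      thus "norm v \<le> t" using t0 by simp
    qed
  qed
  have ne: "norm e = 1"
  proof (rule antisym)
    show "norm e \<le> 1" by (rule pol) (auto simp: Se)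
    obtain \<phi>0 where "\<phi>0 \<in> S" using Sne by blast
    thus "1 \<le> norm e" using Sbound[of \<phi>0 e] Se[of \<phi>0] by simp
  qed
  show ?thesis unfolding Let_def S_def[symmetric] c_def[symmetric]
    using cc sep clos un st_eq nrm ne by blast
qed

end
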